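(* Let $\mathcal{U}\subseteq\mathbb{R}^d$ and $\mathcal{V}\subseteq\mathbb{R}^D$ be compact with $\|u\|\le B$ for all $u\in\mathcal{U}$. Let $f:\mathcal{U}\times\mathcal{V}\to\mathbb{R}$ be continuous, with $f(\cdot,v)$ convex and differentiable for each $v$, $f(u,\cdot)$ $l$-Lipschitz for each $u$, and $\nabla_u f(u,\cdot)$ $r$-Lipschitz for each $u$. Fix $u_0\in\mathcal{U}$ with $R(u_0)$ and $S(u_0)$ finite, let $\zeta$ be the gap $\zeta=\phi(u_0)-\max_{v\in S(u_0)\setminus R(u_0)}f(u_0,v)$ ($\zeta=\infty$ if $S(u_0)=R(u_0)$), let $0\le\epsilon<\zeta$, $A\subseteq\mathcal{V}$ finite, and $0\le\delta<\tfrac12(\zeta-\epsilon)/l$ with $d_H(R(u_0),A)\le\delta$ and $d_H(A,S(u_0))\le\delta$. Then every $z'\in\mathrm{co}\{\nabla_u f(u_0,v): v\in R^\epsilon_A(u_0)\}$ is a $(2r\delta B)$-subgradient of $\phi$ at $u_0$, i.e. $\phi(u)-\phi(u_0)\ge\langle z',u-u_0\rangle-2r\delta B$ for all $u\in\mathcal{U}$.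
   Context: Definitions: $\phi(u)=\max_{v\in\mathcal{V}} f(u,v)$, $R(u)=\{v\in\mathcal{V}: f(u,v)=\phi(u)\}$, $S(u)=\{v_0\in\mathcal{V}:\exists r>0,\ \forall v\in\mathcal{V},\ \|v_0-v\|\le r\Rightarrow f(u,v_0)\ge f(u,v)\}$. For finite $A$: $\phi_A(u)=\max_{v\in A}f(u,v)$, $R^\epsilon_A(u)=\{v\in A:\phi_A(u)-f(u,v)\le\epsilon\}$. $d_H(X,Y)=\max_{x\in X}\min_{y\in Y}\|x-y\|$. $\mathrm{co}$ denotes convex hull. *)

theory Defs
  imports "HOL-Analysis.Analysis"
begin

text \<open>phi(u) = max over V of f(u,v) (attained since V compact and f continuous)\<close>
definition phi :: "('a \<Rightarrow> 'b \<Rightarrow> real) \<Rightarrow> 'b set \<Rightarrow> 'a \<Rightarrow> real" where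
  "phi f V u = (SUP v\<in>V. f u v)"

definition Rset :: "('a \<Rightarrow> 'b \<Rightarrow> real) \<Rightarrow> 'b set \<Rightarrow> 'a \<Rightarrow> 'b set" where
  "Rset f V u = {v\<in>V. f u v = phi f V u}"

definition Sset :: "('a \<Rightarrow> 'b::real_normed_vector \<Rightarrow> real) \<Rightarrow> 'b set \<Rightarrow> 'a \<Rightarrow> 'b set" where
  "Sset f V u = {v0\<in>V. \<exists>r>0. \<forall>v\<in>V. norm (v0 - v) \<le> r \<longrightarrow> f u v0 \<ge> f u v}"

definition phiA :: "('a \<Rightarrow> 'b \<Rightarrow> real) \<Rightarrow> 'b set \<Rightarrow> 'a \<Rightarrow> real" where
  "phiA f A u = Max (f u ` A)"

definition RepsA :: "('a \<Rightarrow> 'b \<Rightarrow> real) \<Rightarrow> 'b set \<Rightarrow> real \<Rightarrow> 'a \<Rightarrow> 'b set" where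
  "RepsA f A \<epsilon> u = {v\<in>A. phiA f A u - f u v \<le> \<epsilon>}"

definition dH :: "'b::metric_space set \<Rightarrow> 'b set \<Rightarrow> real" where
  "dH X Y = (SUP x\<in>X. INF y\<in>Y. dist x y)"

end

theory Submission
  imports Defs
begin

lemma tangent_ineq:
  fixes g :: "'a::real_normed_vector \<Rightarrow> real"
  assumes cv: "convex_on UNIV g" and d: "(g has_derivative D) (at x)"
  shows "g y - g x \<ge> D (y - x)"
proof -
  define h where "h = y - x"
  define k where "k t = g (x + t *\<^sub>R h)" for t :: real
  have lin: "linear D" using d has_derivative_linear by blast
  have ck: "convex_on UNIV k"
  proof (rule convex_onI)
    fix t a b :: real assume t: "0 < t" "t < 1"
    have "x + ((1 - t) *\<^sub>R a + t *\<^sub>R b) *\<^sub>R h = (1 - t) *\<^sub>R (x + a *\<^sub>R h) + t *\<^sub>R (x + b *\<^sub>R h)"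
      by (simp add: algebra_simps)
    then show "k ((1 - t) *\<^sub>R a + t *\<^sub>R b) \<le> (1 - t) * k a + t * k b"
      unfolding k_def using convex_onD[OF cv, of t] t by simp
  qed simp
  have dl: "((\<lambda>t::real. x + t *\<^sub>R h) has_derivative (\<lambda>t. t *\<^sub>R h)) (at 0)"
    by (auto intro!: derivative_eq_intros)
  have d0: "(g has_derivative D) (at (x + 0 *\<^sub>R h))" using d by simp
  have "(k has_derivative (\<lambda>t. D (t *\<^sub>R h))) (at 0)"
    unfolding k_def using has_derivative_compose[OF dl d0] by (simp add: o_def)
  moreover have "(\<lambda>t. D (t *\<^sub>R h)) = (\<lambda>t. D h * t)"
    using lin by (simp add: linear_scale mult.commute)
  ultimately have "(k has_field_derivative D h) (at 0)"
    by (simp add: has_field_derivative_def)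
  then have "k 1 - k 0 \<ge> D h * (1 - 0)"
    by (intro convex_on_imp_above_tangent[OF ck]) auto
  then show ?thesis by (simp add: k_def h_def)
qed

theorem mainTheorem4:
  fixes U :: "'a::euclidean_space set" and V :: "'b::euclidean_space set"
    and f :: "'a \<Rightarrow> 'b \<Rightarrow> real" and G :: "'a \<Rightarrow> 'b \<Rightarrow> 'a"
    and B l r \<epsilon> \<delta> :: real and u0 :: 'a and A :: "'b set"
  assumes U_compact: "compact U" and V_compact: "compact V"
    and U_bound: "\<forall>u\<in>U. norm u \<le> B"
    and f_cont: "continuous_on (U \<times> V) (\<lambda>(u, v). f u v)"
    and f_convex: "\<forall>v\<in>V. convex_on UNIV (\<lambda>u. f u v)"
    and f_grad: "\<forall>v\<in>V. \<forall>u. ((\<lambda>u'. f u' v) has_derivative (\<lambda>h. G u v \<bullet> h)) (at u)"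
    and f_lip: "\<forall>u\<in>U. l-lipschitz_on V (\<lambda>v. f u v)"
    and G_lip: "\<forall>u\<in>U. r-lipschitz_on V (\<lambda>v. G u v)"
    and u0: "u0 \<in> U"
    and R_fin: "finite (Rset f V u0)" and S_fin: "finite (Sset f V u0)"
    and eps: "0 \<le> \<epsilon>"
    and eps_gap: "Sset f V u0 \<noteq> Rset f V u0 \<Longrightarrow>
                  \<epsilon> < phi f V u0 - Max (f u0 ` (Sset f V u0 - Rset f V u0))"
    and A: "A \<subseteq> V" "finite A"
    and delta: "0 \<le> \<delta>"
    and delta_gap: "Sset f V u0 \<noteq> Rset f V u0 \<Longrightarrow>
                  2 * l * \<delta> < (phi f V u0 - Max (f u0 ` (Sset f V u0 - Rset f V u0))) - \<epsilon>"
    and dH1: "dH (Rset f V u0) A \<le> \<delta>" and dH2: "dH A (Sset f V u0) \<le> \<delta>"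
  shows "\<forall>z' \<in> convex hull (G u0 ` RepsA f A \<epsilon> u0). \<forall>u\<in>U.
           phi f V u - phi f V u0 \<ge> z' \<bullet> (u - u0) - 2 * r * \<delta> * B"
proof -
  have l0: "0 \<le> l" if "u \<in> U" for u using f_lip that unfolding lipschitz_on_def by blast
  have r0: "0 \<le> r" if "u \<in> U" for u using G_lip that unfolding lipschitz_on_def by blast
  have contu: "continuous_on V (f u)" if u: "u \<in> U" for u
  proof -
    have "continuous_on V ((\<lambda>(u, v). f u v) \<circ> (\<lambda>v. (u, v)))"
      by (rule continuous_on_compose[OF continuous_on_Pair[OF continuous_on_const continuous_on_id]])
         (rule continuous_on_subset[OF f_cont], use u in auto)
    then show ?thesis by (simp add: o_def)
  qed
  have bdd: "bdd_above (f u ` V)" if "u \<in> U" for u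
    using compact_continuous_image[OF contu[OF that] V_compact]
    by (intro bounded_imp_bdd_above compact_imp_bounded)
  show ?thesis
  proof (cases "RepsA f A \<epsilon> u0 = {}")
    case True then show ?thesis by simp
  next
    case False
    then have Ane: "A \<noteq> {}" unfolding RepsA_def by auto
    then have Vne: "V \<noteq> {}" using A by auto
    obtain x where x: "x \<in> V" "\<forall>y\<in>V. f u0 y \<le> f u0 x"
      using continuous_attains_sup[OF V_compact Vne contu[OF u0]] by blast
    have phix: "phi f V u0 = f u0 x" unfolding phi_def
      by (rule antisym, rule cSUP_least[OF Vne], use x in auto, rule cSUP_upper[OF x(1) bdd[OF u0]])
    have xR: "x \<in> Rset f V u0" using x phix unfolding Rset_def by auto
    have RS: "Rset f V u0 \<subseteq> Sset f V u0"
    proof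
      fix v assume v: "v \<in> Rset f V u0"
      have "\<forall>w\<in>V. f u0 w \<le> f u0 v" using v cSUP_upper[OF _ bdd[OF u0]] unfolding Rset_def phi_def by auto
      then show "v \<in> Sset f V u0" using v unfolding Sset_def Rset_def by (auto intro!: exI[of _ 1])
    qed
    have Sne: "Sset f V u0 \<noteq> {}" using xR RS by auto
    have near: "\<exists>y\<in>Y. dist w y \<le> \<delta>" if "w \<in> X" "finite X" "finite Y" "Y \<noteq> {}" "dH X Y \<le> \<delta>"
      for w and X Y :: "'b set"
    proof -
      have "(INF y\<in>Y. dist w y) \<le> dH X Y" unfolding dH_def
        by (rule cSUP_upper[OF that(1)]) (simp add: that(2))
      moreover have "(INF y\<in>Y. dist w y) = Min ((\<lambda>y. dist w y) ` Y)"
        using that by (simp add: cInf_eq_Min)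
      moreover have "Min ((\<lambda>y. dist w y) ` Y) \<in> (\<lambda>y. dist w y) ` Y"
        using that by (intro Min_in) auto
      ultimately have "Min ((\<lambda>y. dist w y) ` Y) \<le> \<delta>" "Min ((\<lambda>y. dist w y) ` Y) \<in> (\<lambda>y. dist w y) ` Y"
        using that by linarith+
      then show ?thesis by force
    qed
    have key: "\<exists>vs\<in>Rset f V u0. dist v vs \<le> \<delta>" if v: "v \<in> RepsA f A \<epsilon> u0" for v
    proof -
      have vA: "v \<in> A" and vr: "phiA f A u0 - f u0 v \<le> \<epsilon>" using v unfolding RepsA_def by auto
      obtain s where s: "s \<in> Sset f V u0" "dist v s \<le> \<delta>"
        using near[OF vA A(2) S_fin Sne dH2] by blast
      obtain a where a: "a \<in> A" "dist x a \<le> \<delta>"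
        using near[OF xR R_fin A(2) Ane dH1] by blast
      have sR: "s \<in> Rset f V u0"
      proof (rule ccontr)
        assume ns: "s \<notin> Rset f V u0"
        then have SR: "Sset f V u0 \<noteq> Rset f V u0" using s by auto
        define M where "M = Max (f u0 ` (Sset f V u0 - Rset f V u0))"
        have sM: "f u0 s \<le> M" unfolding M_def using s(1) ns S_fin by (intro Max_ge) auto
        have sV: "s \<in> V" using s(1) unfolding Sset_def by auto
        have aV: "a \<in> V" "x \<in> V" "v \<in> V" using a A vA x by auto
        have L: "dist (f u0 p) (f u0 q) \<le> l * dist p q" if "p \<in> V" "q \<in> V" for p q
          using f_lip u0 that unfolding lipschitz_on_def by blast
        have "l * dist v s \<le> l * \<delta>" using s(2) l0[OF u0] by (rule mult_left_mono)
        then have 1: "f u0 v \<le> M + l * \<delta>" using L[OF aV(3) sV] sM by (auto simp: dist_real_def)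
        have "l * dist x a \<le> l * \<delta>" using a(2) l0[OF u0] by (rule mult_left_mono)
        then have 2: "f u0 a \<ge> phi f V u0 - l * \<delta>" using L[OF aV(2) aV(1)] phix by (auto simp: dist_real_def)
        have 3: "f u0 a \<le> phiA f A u0" unfolding phiA_def using a A by (intro Max_ge) auto
        show False using 1 2 3 vr delta_gap[OF SR] unfolding M_def by linarith
      qed
      show ?thesis using sR s by blast
    qed
    have pt: "phi f V u - phi f V u0 \<ge> G u0 v \<bullet> (u - u0) - 2 * r * \<delta> * B"
      if v: "v \<in> RepsA f A \<epsilon> u0" and u: "u \<in> U" for v u
    proof -
      obtain vs where vs: "vs \<in> Rset f V u0" "dist v vs \<le> \<delta>" using key[OF v] by blast
      have vsV: "vs \<in> V" and vsphi: "f u0 vs = phi f V u0" using vs unfolding Rset_def by auto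
      have vV: "v \<in> V" using v A unfolding RepsA_def by auto
      have t: "f u vs - f u0 vs \<ge> G u0 vs \<bullet> (u - u0)"
        using tangent_ineq[of "\<lambda>u'. f u' vs" "\<lambda>h. G u0 vs \<bullet> h" u0 u] f_convex f_grad vsV by auto
      have pu: "f u vs \<le> phi f V u" unfolding phi_def by (rule cSUP_upper[OF vsV bdd[OF u]])
      have h: "norm (u - u0) \<le> 2 * B" proof -
        have "norm u \<le> B" "norm u0 \<le> B" using U_bound u u0 by auto
        then show ?thesis using norm_triangle_ineq4[of u u0] by linarith
      qed
      have g: "norm (G u0 v - G u0 vs) \<le> r * \<delta>"
      proof -
        have "norm (G u0 v - G u0 vs) \<le> r * dist v vs"
          using G_lip u0 vV vsV unfolding lipschitz_on_def dist_norm by blast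
        also have "\<dots> \<le> r * \<delta>" using vs(2) r0[OF u0] by (rule mult_left_mono)
        finally show ?thesis .
      qed
      have "(G u0 v - G u0 vs) \<bullet> (u - u0) \<le> norm (G u0 v - G u0 vs) * norm (u - u0)"
        by (rule norm_cauchy_schwarz)
      also have "\<dots> \<le> (r * \<delta>) * (2 * B)"
        by (rule mult_mono[OF g h]) (use r0[OF u0] delta in auto)
      finally have "G u0 v \<bullet> (u - u0) - G u0 vs \<bullet> (u - u0) \<le> 2 * r * \<delta> * B"
        by (simp add: inner_diff_left)
      then show ?thesis using t pu vsphi by linarith
    qed
    show ?thesis
    proof (intro ballI)
      fix z' u assume z: "z' \<in> convex hull (G u0 ` RepsA f A \<epsilon> u0)" and u: "u \<in> U"
      have "convex hull (G u0 ` RepsA f A \<epsilon> u0) \<subseteq> {z. (u - u0) \<bullet> z \<le> phi f V u - phi f V u0 + 2 * r * \<delta> * B}"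
      proof (rule hull_minimal)
        show "G u0 ` RepsA f A \<epsilon> u0 \<subseteq> {z. (u - u0) \<bullet> z \<le> phi f V u - phi f V u0 + 2 * r * \<delta> * B}"
          using pt[OF _ u] by (force simp: inner_commute)
        show "convex {z. (u - u0) \<bullet> z \<le> phi f V u - phi f V u0 + 2 * r * \<delta> * B}"
          by (rule convex_halfspace_le)
      qed
      then show "phi f V u - phi f V u0 \<ge> z' \<bullet> (u - u0) - 2 * r * \<delta> * B"
        using z by (auto simp: inner_commute)
    qed
  qed
qed

end
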